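(* Fix integers $0\le k\le n$ and $x\in\mathbb Z_{\ge0}$, and let $S$ have law $\mathbf P^n_x$. For $0\le i\le k$ and $y\ge0$ let $f(y,i)=\mathbf E^{n-i}_y[S_{k-i}]$. Then $M_i=f(S_i,i)$, $0\le i\le k$, is a martingale with respect to the natural filtration of $S$, and $|M_{i+1}-M_i|\le2$ for $0\le i\le k-1$. When $k=n$ one has explicitly $f(y,i)=-1+\frac{y+1}{\psi(y;n-i)}$.
   Context: Let $p_n(w)$ be the probability that simple symmetric random walk on $\mathbb Z$ started at $0$ is at $w$ at time $n$. For $x,y\in\mathbb Z_{\ge0}$, $p^{(1/2)}_n(x,y)=p_n(x-y)-p_n(x+y+2)$ and $\psi(x;n)=\sum_{y\ge0}p^{(1/2)}_n(x,y)$. $\mathbf P^N_y$ is the uniform probability measure on paths $(s_0,\dots,s_N)\in\mathbb Z_{\ge0}^{N+1}$ with $s_0=y$ and $|s_{i+1}-s_i|=1$; $S$ is its coordinate process and $\mathbf E^N_y$ its expectation. *)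

theory Defs
  imports "HOL-Probability.Probability"
begin

definition srw_p :: "nat \<Rightarrow> int \<Rightarrow> real" where
  "srw_p n w = (if \<bar>w\<bar> \<le> int n \<and> even (int n + w)
                then real (n choose nat ((int n + w) div 2)) / 2 ^ n else 0)"

text \<open>Killed (at -1) transition kernel p^(1/2)_n(x,y) = p_n(x-y) - p_n(x+y+2).\<close>
definition p_half :: "nat \<Rightarrow> int \<Rightarrow> int \<Rightarrow> real" where
  "p_half n x y = srw_p n (x - y) - srw_p n (x + y + 2)"

definition psi :: "int \<Rightarrow> nat \<Rightarrow> real" where
  "psi x n = (\<Sum>y. p_half n x (int y))"

definition paths :: "nat \<Rightarrow> int \<Rightarrow> (nat \<Rightarrow> int) set" where
  "paths N y = {s. s 0 = y \<and> (\<forall>i\<le>N. 0 \<le> s i) \<and> (\<forall>i<N. \<bar>s (Suc i) - s i\<bar> = 1)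
                  \<and> (\<forall>i>N. s i = 0)}"

definition Ppath :: "nat \<Rightarrow> int \<Rightarrow> (nat \<Rightarrow> int) pmf" where
  "Ppath N y = pmf_of_set (paths N y)"

definition Ef :: "nat \<Rightarrow> int \<Rightarrow> nat \<Rightarrow> real" where
  "Ef N y j = measure_pmf.expectation (Ppath N y) (\<lambda>s. real_of_int (s j))"

end

theory Submission imports Defs begin

definition pcons :: "int \<Rightarrow> (nat \<Rightarrow> int) \<Rightarrow> nat \<Rightarrow> int" where
  "pcons y c = (\<lambda>j. case j of 0 \<Rightarrow> y | Suc j \<Rightarrow> c j)"

lemma pcons_simps[simp]: "pcons y c 0 = y" "pcons y c (Suc j) = c j"
  by (simp_all add: pcons_def)

lemma pcons_inj: "pcons y c = pcons y d \<Longrightarrow> c = d"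
  by (metis ext pcons_simps(2))

lemma paths_neg: "y < 0 \<Longrightarrow> paths m y = {}"
  unfolding paths_def by auto

lemma paths_0: "0 \<le> y \<Longrightarrow> paths 0 y = {\<lambda>i. if i = 0 then y else 0}"
  unfolding paths_def by (auto simp: fun_eq_iff)

lemma pcons_in_paths:
  assumes "c \<in> paths m z" "\<bar>z - y\<bar> = 1" "0 \<le> y"
  shows "pcons y c \<in> paths (Suc m) y"
proof -
  have "\<forall>i\<le>Suc m. 0 \<le> pcons y c i" using assms unfolding paths_def
    by (auto simp: pcons_def split: nat.split)
  moreover have "\<forall>i<Suc m. \<bar>pcons y c (Suc i) - pcons y c i\<bar> = 1" using assms unfolding paths_def
    by (auto simp: pcons_def split: nat.split)
  moreover have "\<forall>i>Suc m. pcons y c i = 0" using assms unfolding paths_def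
    by (auto simp: pcons_def split: nat.split)
  ultimately show ?thesis unfolding paths_def by simp
qed

lemma paths_Suc:
  assumes "0 \<le> y"
  shows "paths (Suc m) y = pcons y ` paths m (y+1) \<union> pcons y ` paths m (y-1)"
proof
  show "pcons y ` paths m (y+1) \<union> pcons y ` paths m (y-1) \<subseteq> paths (Suc m) y"
    using pcons_in_paths[OF _ _ assms] by force
next
  show "paths (Suc m) y \<subseteq> pcons y ` paths m (y+1) \<union> pcons y ` paths m (y-1)"
  proof
    fix t assume t: "t \<in> paths (Suc m) y"
    define c where "c = (\<lambda>j. t (Suc j))"
    have teq: "t = pcons y c" using t unfolding paths_def c_def
      by (auto simp: fun_eq_iff pcons_def split: nat.split)
    have c: "c \<in> paths m (t 1)" using t unfolding paths_def c_def by auto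
    have "\<bar>t 1 - t 0\<bar> = 1" "t 0 = y" using t unfolding paths_def by auto
    then have "t 1 = y + 1 \<or> t 1 = y - 1" by auto
    then show "t \<in> pcons y ` paths m (y+1) \<union> pcons y ` paths m (y-1)"
      using c teq by auto
  qed
qed

lemma finite_paths: "finite (paths m y)"
proof (induction m arbitrary: y)
  case 0 then show ?case by (cases "y < 0") (auto simp: paths_neg paths_0)
next
  case (Suc m) then show ?case by (cases "y < 0") (auto simp: paths_neg paths_Suc)
qed

lemma sum_paths_Suc:
  assumes "0 \<le> y"
  shows "(\<Sum>c\<in>paths (Suc m) y. F c) =
     (\<Sum>c\<in>paths m (y+1). F (pcons y c)) + (\<Sum>c\<in>paths m (y-1). F (pcons y c))"
proof -
  have d: "pcons y ` paths m (y+1) \<inter> pcons y ` paths m (y-1) = {}"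
    unfolding paths_def by (auto dest: pcons_inj)
  have i: "inj_on (pcons y) A" for A by (auto intro: inj_onI pcons_inj)
  show ?thesis
    unfolding paths_Suc[OF assms]
    by (subst sum.union_disjoint) (auto simp: finite_paths d sum.reindex[OF i])
qed

definition Nr :: "nat \<Rightarrow> int \<Rightarrow> real" where "Nr m y = real (card (paths m y))"
definition Sj :: "nat \<Rightarrow> int \<Rightarrow> nat \<Rightarrow> real" where
  "Sj m y j = (\<Sum>c\<in>paths m y. real_of_int (c j))"
definition Eq :: "nat \<Rightarrow> int \<Rightarrow> nat \<Rightarrow> real" where "Eq m y j = Sj m y j / Nr m y"

lemma Nr_neg: "y < 0 \<Longrightarrow> Nr m y = 0" by (simp add: Nr_def paths_neg)
lemma Sj_neg: "y < 0 \<Longrightarrow> Sj m y j = 0" by (simp add: Sj_def paths_neg)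
lemma Nr_0: "0 \<le> y \<Longrightarrow> Nr 0 y = 1" by (simp add: Nr_def paths_0)

lemma Nr_sum: "Nr m y = (\<Sum>c\<in>paths m y. 1)" by (simp add: Nr_def)

lemma Nr_Suc: "0 \<le> y \<Longrightarrow> Nr (Suc m) y = Nr m (y+1) + Nr m (y-1)"
  unfolding Nr_sum by (rule sum_paths_Suc)

lemma Sj_Suc: "0 \<le> y \<Longrightarrow> Sj (Suc m) y (Suc j) = Sj m (y+1) j + Sj m (y-1) j"
  unfolding Sj_def by (subst sum_paths_Suc) simp_all

lemma Sj_0: "Sj m y 0 = real_of_int y * Nr m y"
proof -
  have "Sj m y 0 = (\<Sum>c\<in>paths m y. real_of_int y)"
    unfolding Sj_def by (rule sum.cong) (auto simp: paths_def)
  then show ?thesis by (simp add: Nr_def)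
qed

lemma Nr_nonneg: "0 \<le> Nr m y" by (simp add: Nr_def)

lemma Nr_pos: "0 \<le> y \<Longrightarrow> 0 < Nr m y"
proof (induction m arbitrary: y)
  case 0 then show ?case by (simp add: Nr_0)
next
  case (Suc m)
  then have "0 < Nr m (y+1)" by simp
  then show ?case using Suc.prems Nr_nonneg[of m "y-1"] by (simp add: Nr_Suc)
qed

lemma NEq: "Nr m y * Eq m y j = Sj m y j"
  using Nr_pos[of y m] by (cases "y < 0") (auto simp: Eq_def Nr_neg Sj_neg)

lemma Eq_0: "0 \<le> y \<Longrightarrow> Eq m y 0 = real_of_int y"
  using Nr_pos[of y m] by (simp add: Eq_def Sj_0)

lemma Nr_concave: "0 \<le> y \<Longrightarrow> Nr m (y-1) + Nr m (y+1) \<le> 2 * Nr m y"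
proof (induction m arbitrary: y)
  case 0
  then show ?case by (cases "y = 0") (auto simp: Nr_0 Nr_neg)
next
  case (Suc m)
  show ?case
  proof (cases "y = 0")
    case True
    have "Nr m 0 + Nr m 2 \<le> 2 * Nr m 1" using Suc.IH[of 1] by simp
    then show ?thesis using True by (simp add: Nr_Suc Nr_neg)
  next
    case False
    with Suc.prems have y: "1 \<le> y" by simp
    have e1: "Nr (Suc m) (y-1) = Nr m y + Nr m (y-2)"
      using Nr_Suc[of "y-1" m] y by simp
    have e2: "Nr (Suc m) (y+1) = Nr m (y+2) + Nr m y"
      using Nr_Suc[of "y+1" m] y by (simp add: add_ac)
    have e3: "Nr (Suc m) y = Nr m (y+1) + Nr m (y-1)"
      using Nr_Suc[of "y" m] y by simp
    have i1: "Nr m y + Nr m (y+2) \<le> 2 * Nr m (y+1)" using Suc.IH[of "y+1"] y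
      by (simp add: add.commute)
    have i2: "Nr m (y-2) + Nr m y \<le> 2 * Nr m (y-1)" using Suc.IH[of "y-1"] y by simp
    show ?thesis unfolding e1 e2 e3 distrib_left using i1 i2 by linarith
  qed
qed

lemma ratio_aux:
  fixes p q r s :: real
  assumes "0 \<le> p" "0 \<le> s" "0 \<le> q" "0 \<le> r" "p + r \<le> 2*q" "q + s \<le> 2*r"
  shows "s * p \<le> r * q"
proof -
  have "s * p \<le> (2*r - q) * (2*q - r)"
    by (rule mult_mono) (use assms in linarith)+
  also have "\<dots> = r * q - 2 * (r - q)^2" by (simp add: algebra_simps power2_eq_square)
  also have "\<dots> \<le> r * q" by simp
  finally show ?thesis .
qed

lemma Nr_ratio: "0 \<le> y \<Longrightarrow> Nr m (y+2) * Nr m (y-1) \<le> Nr m (y+1) * Nr m y"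
  apply (rule ratio_aux)
  using Nr_nonneg Nr_concave[of y m] Nr_concave[of "y+1" m] by (simp_all add: add_ac)

definition aw :: "nat \<Rightarrow> int \<Rightarrow> real" where
  "aw m y = Nr m (y+1) / (Nr m (y+1) + Nr m (y-1))"

lemma aw_bounds: "0 \<le> y \<Longrightarrow> 0 \<le> aw m y \<and> aw m y \<le> 1"
  using Nr_pos[of "y+1" m] Nr_nonneg[of m "y-1"] by (simp add: aw_def divide_simps)

lemma aw_0: "aw m 0 = 1"
  using Nr_pos[of 1 m] by (simp add: aw_def Nr_neg)

lemma aw_mono: "0 \<le> y \<Longrightarrow> aw m (y+1) \<le> aw m y"
proof -
  assume y: "0 \<le> y"
  have r: "Nr m (y+2) * Nr m (y-1) \<le> Nr m (y+1) * Nr m y" using Nr_ratio[OF y] .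
  have p1: "0 < Nr m (y+2) + Nr m y" using Nr_pos[of "y+2" m] Nr_nonneg[of m y] y by simp
  have p2: "0 < Nr m (y+1) + Nr m (y-1)" using Nr_pos[of "y+1" m] Nr_nonneg[of m "y-1"] y by simp
  have "Nr m (y+2) * (Nr m (y+1) + Nr m (y-1)) \<le> Nr m (y+1) * (Nr m (y+2) + Nr m y)"
    using r by (simp add: algebra_simps)
  then show ?thesis using p1 p2 by (simp add: aw_def divide_simps add_ac mult.commute)
qed

lemma Eq_Suc: "0 \<le> y \<Longrightarrow>
  Eq (Suc m) y (Suc j) = aw m y * Eq m (y+1) j + (1 - aw m y) * Eq m (y-1) j"
proof -
  assume y: "0 \<le> y"
  have p2: "0 < Nr m (y+1) + Nr m (y-1)" using Nr_pos[of "y+1" m] Nr_nonneg[of m "y-1"] y by simp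
  have "Eq (Suc m) y (Suc j) = (Nr m (y+1) * Eq m (y+1) j + Nr m (y-1) * Eq m (y-1) j) /
       (Nr m (y+1) + Nr m (y-1))"
    unfolding NEq by (simp add: Eq_def Sj_Suc Nr_Suc y)
  also have "\<dots> = aw m y * Eq m (y+1) j + (1 - aw m y) * Eq m (y-1) j"
    using p2 by (simp add: aw_def divide_simps)
  finally show ?thesis .
qed

lemma comb1:
  fixes a d e :: real
  assumes "0 \<le> a" "a \<le> 1" "\<bar>d\<bar> \<le> 1" "\<bar>e\<bar> \<le> 1"
  shows "\<bar>a * d + (1 - a) * e\<bar> \<le> 1"
proof -
  have "\<bar>a * d + (1 - a) * e\<bar> \<le> \<bar>a * d\<bar> + \<bar>(1 - a) * e\<bar>" by (rule abs_triangle_ineq)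
  also have "\<dots> = a * \<bar>d\<bar> + (1 - a) * \<bar>e\<bar>" using assms by (simp add: abs_mult)
  also have "\<dots> \<le> a * 1 + (1 - a) * 1"
    by (intro add_mono mult_left_mono) (use assms in auto)
  finally show ?thesis by simp
qed

lemma comb3:
  fixes a b d1 d2 d3 :: real
  assumes "0 \<le> b" "b \<le> a" "a \<le> 1" "\<bar>d1\<bar> \<le> 1" "\<bar>d2\<bar> \<le> 1" "\<bar>d3\<bar> \<le> 1"
  shows "\<bar>(1 - a) * d1 + (b - a) * d2 + b * d3\<bar> \<le> 1"
proof -
  have "\<bar>(1 - a) * d1 + (b - a) * d2 + b * d3\<bar> \<le> \<bar>(1 - a) * d1\<bar> + \<bar>(a - b) * d2\<bar> + \<bar>b * d3\<bar>"
    by (smt (verit) abs_minus_commute abs_triangle_ineq minus_diff_eq mult_minus_left)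
  also have "\<dots> = (1 - a) * \<bar>d1\<bar> + (a - b) * \<bar>d2\<bar> + b * \<bar>d3\<bar>" using assms by (simp add: abs_mult)
  also have "\<dots> \<le> (1 - a) * 1 + (a - b) * 1 + b * 1"
    by (intro add_mono mult_left_mono) (use assms in auto)
  finally show ?thesis by simp
qed

lemma Lip: "j \<le> m \<Longrightarrow> 0 \<le> y \<Longrightarrow> \<bar>Eq m (y+1) j - Eq m y j\<bar> \<le> 1"
proof (induction j arbitrary: m y)
  case 0 then show ?case by (simp add: Eq_0)
next
  case (Suc j)
  then obtain m' where m: "m = Suc m'" "j \<le> m'" by (cases m) auto
  define u where "u z = Eq m' z j" for z
  have IH: "\<And>z. 0 \<le> z \<Longrightarrow> \<bar>u (z+1) - u z\<bar> \<le> 1" using Suc.IH[OF m(2)] by (simp add: u_def)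
  show ?case
  proof (cases "y = 0")
    case True
    have e0: "Eq m 0 (Suc j) = u 1" using Eq_Suc[of 0 m' j] by (simp add: m aw_0 u_def)
    have e1: "Eq m 1 (Suc j) = aw m' 1 * u 2 + (1 - aw m' 1) * u 0"
      using Eq_Suc[of 1 m' j] by (simp add: m u_def)
    have "Eq m 1 (Suc j) - Eq m 0 (Suc j) = aw m' 1 * (u 2 - u 1) + (1 - aw m' 1) * (- (u 1 - u 0))"
      unfolding e0 e1 by (simp add: algebra_simps)
    moreover have "\<bar>aw m' 1 * (u 2 - u 1) + (1 - aw m' 1) * (- (u 1 - u 0))\<bar> \<le> 1"
      using aw_bounds[of 1 m'] IH[of 1] IH[of 0] by (intro comb1) auto
    ultimately show ?thesis using True by simp
  next
    case False
    with Suc.prems have y: "1 \<le> y" by simp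
    have e0: "Eq m y (Suc j) = aw m' y * u (y+1) + (1 - aw m' y) * u (y-1)"
      using Eq_Suc[of y m' j] y by (simp add: m u_def)
    have e1: "Eq m (y+1) (Suc j) = aw m' (y+1) * u (y+2) + (1 - aw m' (y+1)) * u y"
      using Eq_Suc[of "y+1" m' j] y by (simp add: m u_def add_ac)
    have "Eq m (y+1) (Suc j) - Eq m y (Suc j) = (1 - aw m' y) * (u y - u (y-1))
        + (aw m' (y+1) - aw m' y) * (u (y+1) - u y) + aw m' (y+1) * (u (y+2) - u (y+1))"
      unfolding e0 e1 by (simp add: algebra_simps)
    moreover have "\<bar>(1 - aw m' y) * (u y - u (y-1))
        + (aw m' (y+1) - aw m' y) * (u (y+1) - u y) + aw m' (y+1) * (u (y+2) - u (y+1))\<bar> \<le> 1"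
    proof (rule comb3)
      show "0 \<le> aw m' (y+1)" "aw m' y \<le> 1" using aw_bounds[of "y+1" m'] aw_bounds[of y m'] y by auto
      show "aw m' (y+1) \<le> aw m' y" using aw_mono[of y m'] y by simp
      show "\<bar>u y - u (y-1)\<bar> \<le> 1" using IH[of "y-1"] y by simp
      show "\<bar>u (y+1) - u y\<bar> \<le> 1" using IH[of y] y by simp
      show "\<bar>u (y+2) - u (y+1)\<bar> \<le> 1" using IH[of "y+1"] y by (simp add: add_ac)
    qed
    ultimately show ?thesis by simp
  qed
qed

lemma step_bound:
  assumes "j \<le> m" "0 \<le> y" "z = y + 1 \<or> z = y - 1" "0 \<le> z"
  shows "\<bar>Eq m z j - Eq (Suc m) y (Suc j)\<bar> \<le> 2"
proof (cases "y = 0")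
  case True
  then have "z = 1" using assms by auto
  then show ?thesis using Eq_Suc[of 0 m j] True by (simp add: aw_0)
next
  case False
  then have y: "1 \<le> y" using assms by simp
  have l1: "\<bar>Eq m y j - Eq m (y-1) j\<bar> \<le> 1" using Lip[OF assms(1), of "y-1"] y by simp
  have l2: "\<bar>Eq m (y+1) j - Eq m y j\<bar> \<le> 1" using Lip[OF assms(1), of y] y by simp
  have d: "\<bar>Eq m (y+1) j - Eq m (y-1) j\<bar> \<le> 2" using l1 l2 by linarith
  have e: "Eq (Suc m) y (Suc j) = aw m y * Eq m (y+1) j + (1 - aw m y) * Eq m (y-1) j"
    using Eq_Suc[of y m j] y by simp
  have a: "0 \<le> aw m y" "aw m y \<le> 1" using aw_bounds[of y m] y by auto
  show ?thesis
  proof (cases "z = y + 1")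
    case True
    have "Eq m z j - Eq (Suc m) y (Suc j) = (1 - aw m y) * (Eq m (y+1) j - Eq m (y-1) j)"
      unfolding e True by (simp add: algebra_simps)
    also have "\<bar>\<dots>\<bar> \<le> 1 * 2" unfolding abs_mult using a d
      by (intro mult_mono) auto
    finally show ?thesis by simp
  next
    case False
    then have z: "z = y - 1" using assms by auto
    have "Eq m z j - Eq (Suc m) y (Suc j) = - (aw m y * (Eq m (y+1) j - Eq m (y-1) j))"
      unfolding e z by (simp add: algebra_simps)
    also have "\<bar>\<dots>\<bar> \<le> 1 * 2" unfolding abs_minus_cancel abs_mult using a d
      by (intro mult_mono) auto
    finally show ?thesis by simp
  qed
qed

lemma srw_alt: "srw_p m w = (if - int m \<le> w \<and> even (int m + w)
     then real (m choose nat ((int m + w) div 2)) / 2 ^ m else 0)"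
proof (cases "w > int m \<and> even (int m + w)")
  case True
  then have "2 dvd (int m + w)" by simp
  then obtain k where k: "int m + w = 2 * k" unfolding dvd_def by blast
  then have "nat ((int m + w) div 2) > m" using True by simp
  then show ?thesis using True by (simp add: srw_p_def binomial_eq_0)
qed (auto simp: srw_p_def)

lemma srw_Suc: "srw_p (Suc m) w = (srw_p m (w+1) + srw_p m (w-1)) / 2"
proof (cases "even (int m + 1 + w)")
  case False
  then show ?thesis by (simp add: srw_alt add_ac)
next
  case True
  show ?thesis
  proof (cases "w < - int m - 1")
    case True
    then show ?thesis by (simp add: srw_alt)
  next
    case False
  show ?thesis
  proof (cases "w = - int m - 1")
    case True
    then show ?thesis by (simp add: srw_alt)
  next
    case False
    from True have "2 dvd (int m + 1 + w)" by simp
    then obtain k where k: "int m + 1 + w = 2 * k" unfolding dvd_def by blast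
    have "k \<ge> 1"
    proof (rule ccontr)
      assume "\<not> k \<ge> 1"
      then have "k \<le> 0" by simp
      then show False using k \<open>k \<le> 0\<close> \<open>w \<noteq> - int m - 1\<close> \<open>\<not> w < - int m - 1\<close> by linarith
    qed
    define r where "r = nat (k - 1)"
    have r: "k = int r + 1" using \<open>k \<ge> 1\<close> by (simp add: r_def)
    have w: "w = 2 * int r + 1 - int m" using k r by simp
    have e1: "nat ((int (Suc m) + w) div 2) = Suc r" using w by simp
    have e2: "nat ((int m + (w+1)) div 2) = Suc r" using w by simp
    have e3: "nat ((int m + (w-1)) div 2) = r" using w by simp
    have c1: "- int (Suc m) \<le> w \<and> even (int (Suc m) + w)" using w by simp
    have c2: "- int m \<le> w + 1 \<and> even (int m + (w+1))" using w by simp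
    have c3: "- int m \<le> w - 1 \<and> even (int m + (w-1))" using w by simp
    show ?thesis
      unfolding srw_alt[of "Suc m"] srw_alt[of m "w+1"] srw_alt[of m "w-1"]
      using c1 c2 c3 unfolding e1 e2 e3 by (simp add: field_simps)
  qed
  qed
qed

lemma srw_sym: "srw_p m (- w) = srw_p m w"
proof (cases "\<bar>w\<bar> \<le> int m \<and> even (int m + w)")
  case True
  define a where "a = (int m + w) div 2"
  have a: "int m + w = 2 * a" using True by (simp add: a_def)
  have a2: "0 \<le> a" "a \<le> int m" using a True by linarith+
  have "nat ((int m + - w) div 2) = m - nat a" using a a2 by linarith
  moreover have "nat ((int m + w) div 2) = nat a" using a by simp
  moreover have "even (int m - w)" using a by presburger
  ultimately show ?thesis using True a2
    by (simp add: srw_p_def binomial_symmetric[of "nat a" m] nat_le_iff)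
next
  case False
  have "even (int m + - w) = even (int m + w)" by presburger
  then have "\<not> (\<bar>- w\<bar> \<le> int m \<and> even (int m + - w))" using False by simp
  then have h2: "srw_p m (- w) = 0" unfolding srw_p_def by (rule if_not_P)
  have h1: "srw_p m w = 0" unfolding srw_p_def using False by (rule if_not_P)
  show ?thesis using h1 h2 by simp
qed

lemma p_half_Suc: "p_half (Suc m) y z = (p_half m (y+1) z + p_half m (y-1) z) / 2"
proof -
  have "p_half (Suc m) y z = (srw_p m (y-z+1) + srw_p m (y-z-1)) / 2
        - (srw_p m (y+z+2+1) + srw_p m (y+z+2-1)) / 2"
    unfolding p_half_def srw_Suc ..
  also have "\<dots> = (p_half m (y+1) z + p_half m (y-1) z) / 2"
    unfolding p_half_def by (simp add: algebra_simps diff_divide_distrib)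
  finally show ?thesis .
qed

lemma p_half_m1: "p_half m (-1) z = 0"
  using srw_sym[of m "z+1"] by (simp add: p_half_def add_ac)

definition Cz :: "nat \<Rightarrow> int \<Rightarrow> int \<Rightarrow> real" where
  "Cz m y z = (\<Sum>c\<in>paths m y. if c m = z then 1 else 0)"

lemma Cz_Suc: "0 \<le> y \<Longrightarrow> Cz (Suc m) y z = Cz m (y+1) z + Cz m (y-1) z"
  unfolding Cz_def by (subst sum_paths_Suc) simp_all

lemma Cz_eq: "-1 \<le> y \<Longrightarrow> 0 \<le> z \<Longrightarrow> Cz m y z = 2^m * p_half m y z"
proof (induction m arbitrary: y)
  case 0
  show ?case
  proof (cases "y = -1")
    case True then show ?thesis using 0 by (simp add: Cz_def paths_neg p_half_def srw_p_def)
  next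
    case False
    then have "0 \<le> y" using 0 by simp
    then show ?thesis using 0 by (simp add: Cz_def paths_0 p_half_def srw_p_def)
  qed
next
  case (Suc m)
  show ?case
  proof (cases "y = -1")
    case True then show ?thesis by (simp add: Cz_def paths_neg p_half_m1)
  next
    case False
    then have y: "0 \<le> y" using Suc by simp
    show ?thesis using Suc.IH[of "y+1"] Suc.IH[of "y-1"] Suc.prems y
      by (simp add: Cz_Suc p_half_Suc distrib_left)
  qed
qed

lemma Nr_psi: "0 \<le> y \<Longrightarrow> Nr m y = 2^m * psi y m"
proof -
  assume y: "0 \<le> y"
  define Zs where "Zs = (\<lambda>c. nat (c m)) ` paths m y"
  have fZ: "finite Zs" by (simp add: Zs_def finite_paths)
  have pc: "\<And>n. p_half m y (int n) = Cz m y (int n) / 2^m"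
    using Cz_eq[of y "int _" m] y by simp
  have z0: "Cz m y (int n) = 0" if "n \<notin> Zs" for n
  proof -
    have "\<And>c. c \<in> paths m y \<Longrightarrow> c m \<noteq> int n" using that by (force simp: Zs_def)
    then show ?thesis unfolding Cz_def by (intro sum.neutral) auto
  qed
  have "psi y m = (\<Sum>n\<in>Zs. Cz m y (int n) / 2^m)"
    unfolding psi_def pc by (rule suminf_finite[OF fZ]) (simp add: z0)
  also have "\<dots> = (\<Sum>n\<in>Zs. Cz m y (int n)) / 2^m" by (simp add: sum_divide_distrib)
  also have "(\<Sum>n\<in>Zs. Cz m y (int n)) = (\<Sum>c\<in>paths m y. \<Sum>n\<in>Zs. if c m = int n then 1 else 0)"
    unfolding Cz_def by (rule sum.swap)
  also have "\<dots> = (\<Sum>c\<in>paths m y. 1)"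
  proof (rule sum.cong)
    fix c assume c: "c \<in> paths m y"
    then have "0 \<le> c m" by (simp add: paths_def)
    then have "\<And>n. (c m = int n) = (nat (c m) = n)" by auto
    then have "(\<Sum>n\<in>Zs. if c m = int n then 1 else (0::real)) = (\<Sum>n\<in>Zs. if nat (c m) = n then 1 else 0)"
      by simp
    also have "\<dots> = 1" using c fZ by (simp add: Zs_def)
    finally show "(\<Sum>n\<in>Zs. if c m = int n then 1 else (0::real)) = 1" .
  qed simp
  finally show ?thesis by (simp add: Nr_sum)
qed

definition Bs :: "nat \<Rightarrow> int \<Rightarrow> real" where
  "Bs m y = (\<Sum>c\<in>paths m y. real_of_int (c m) + 1)"

lemma Bs_eq: "-1 \<le> y \<Longrightarrow> Bs m y = (real_of_int y + 1) * 2^m"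
proof (induction m arbitrary: y)
  case 0
  then show ?case by (cases "y = -1") (auto simp: Bs_def paths_neg paths_0)
next
  case (Suc m)
  show ?case
  proof (cases "y = -1")
    case True then show ?thesis by (simp add: Bs_def paths_neg)
  next
    case False
    then have y: "0 \<le> y" using Suc by simp
    have "Bs (Suc m) y = Bs m (y+1) + Bs m (y-1)"
      unfolding Bs_def by (subst sum_paths_Suc[OF y]) simp
    then show ?thesis using Suc.IH[of "y+1"] Suc.IH[of "y-1"] y by (simp add: algebra_simps)
  qed
qed

lemma Eq_final: "0 \<le> y \<Longrightarrow> Eq m y m = -1 + (real_of_int y + 1) / psi y m"
proof -
  assume y: "0 \<le> y"
  have "Bs m y = Sj m y m + Nr m y" by (simp add: Bs_def Sj_def Nr_sum sum.distrib)
  then have "Sj m y m = (real_of_int y + 1) * 2^m - Nr m y" using Bs_eq[of y m] y by simp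
  moreover have N: "Nr m y = 2^m * psi y m" using Nr_psi[OF y, of m] by simp
  moreover have "0 < psi y m" using Nr_pos[OF y, of m] N by (simp add: zero_less_mult_iff)
  ultimately show ?thesis by (simp add: Eq_def field_simps)
qed

lemma sum_c0: "(\<Sum>c\<in>paths m z. F (c 0)) = Nr m z * F z"
proof -
  have "(\<Sum>c\<in>paths m z. F (c 0)) = (\<Sum>c\<in>paths m z. F z)"
    by (rule sum.cong) (auto simp: paths_def)
  then show ?thesis by (simp add: Nr_def)
qed

lemma paths_ne: "0 \<le> y \<Longrightarrow> paths m y \<noteq> {}"
  using Nr_pos[of y m] by (auto simp: Nr_def)

lemma Ef_Eq: "0 \<le> y \<Longrightarrow> Ef m y j = Eq m y j"
  unfolding Ef_def Ppath_def Eq_def Sj_def Nr_def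
  by (subst integral_pmf_of_set) (auto simp: paths_ne finite_paths)

lemma cond_pmf_of_set':
  assumes "finite P" "P \<inter> E \<noteq> {}"
  shows "cond_pmf (pmf_of_set P) E = pmf_of_set (P \<inter> E)"
proof -
  have P: "P \<noteq> {}" using assms by auto
  have ne: "set_pmf (pmf_of_set P) \<inter> E \<noteq> {}" using assms P by simp
  have cP: "0 < card P" using assms P by (simp add: card_gt_0_iff)
  have cPE: "0 < card (P \<inter> E)" using assms by (simp add: card_gt_0_iff)
  show ?thesis
  proof (rule pmf_eqI)
    fix t
    show "pmf (cond_pmf (pmf_of_set P) E) t = pmf (pmf_of_set (P \<inter> E)) t"
      unfolding pmf_cond[OF ne] using assms P cP cPE
      by (auto simp: measure_pmf_of_set indicator_def)
  qed
qed

lemma shift_bij: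
  assumes s: "s \<in> paths n x" and i: "i \<le> n"
  shows "bij_betw (\<lambda>t j. t (i + j)) (paths n x \<inter> {t. \<forall>j\<le>i. t j = s j}) (paths (n - i) (s i))"
proof (rule bij_betw_byWitness[where f' = "\<lambda>c j. if j < i then s j else c (j - i)"])
  show "\<forall>t\<in>paths n x \<inter> {t. \<forall>j\<le>i. t j = s j}. (\<lambda>j. if j < i then s j else t (i + (j - i))) = t"
    by (auto simp: fun_eq_iff)
  show "\<forall>c\<in>paths (n - i) (s i). (\<lambda>j. if i + j < i then s (i + j) else c (i + j - i)) = c"
    by auto
  show "(\<lambda>t j. t (i + j)) ` (paths n x \<inter> {t. \<forall>j\<le>i. t j = s j}) \<subseteq> paths (n - i) (s i)"
    unfolding paths_def using i by auto
  show "(\<lambda>c j. if j < i then s j else c (j - i)) ` paths (n - i) (s i) \<subseteq> paths n x \<inter> {t. \<forall>j\<le>i. t j = s j}"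
  proof
    fix t assume "t \<in> (\<lambda>c j. if j < i then s j else c (j - i)) ` paths (n - i) (s i)"
    then obtain c where c: "c \<in> paths (n - i) (s i)" and t: "t = (\<lambda>j. if j < i then s j else c (j - i))"
      by auto
    have cp: "c 0 = s i" "\<forall>j\<le>n-i. 0 \<le> c j" "\<forall>j<n-i. \<bar>c (Suc j) - c j\<bar> = 1" "\<forall>j>n-i. c j = 0"
      using c by (auto simp: paths_def)
    have sp: "s 0 = x" "\<forall>j\<le>n. 0 \<le> s j" "\<forall>j<n. \<bar>s (Suc j) - s j\<bar> = 1" "\<forall>j>n. s j = 0"
      using s by (auto simp: paths_def)
    have "t 0 = x" using cp sp by (auto simp: t)
    moreover have "\<forall>j\<le>n. 0 \<le> t j"
    proof (intro allI impI)
      fix j assume "j \<le> n" then show "0 \<le> t j" using cp sp by (auto simp: t)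
    qed
    moreover have "\<forall>j<n. \<bar>t (Suc j) - t j\<bar> = 1"
    proof (intro allI impI)
      fix j assume j: "j < n"
      consider "Suc j < i" | "Suc j = i" | "i \<le> j" by linarith
      then show "\<bar>t (Suc j) - t j\<bar> = 1"
      proof cases
        case 1 then show ?thesis using sp j by (simp add: t)
      next
        case 2 then show ?thesis using sp j cp by (auto simp: t)
      next
        case 3
        then have "Suc j - i = Suc (j - i)" by simp
        then show ?thesis using cp j 3 by (simp add: t)
      qed
    qed
    moreover have "\<forall>j>n. t j = 0" using cp i by (auto simp: t)
    moreover have "\<forall>j\<le>i. t j = s j" using cp by (auto simp: t)
    ultimately show "t \<in> paths n x \<inter> {t. \<forall>j\<le>i. t j = s j}" unfolding paths_def by simp
  qed
qed

theorem propositionA6: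
  fixes k n :: nat and x :: int
  assumes "k \<le> n" and "0 \<le> x"
  shows "(\<forall>i<k. \<forall>s\<in>set_pmf (Ppath n x).
            measure_pmf.expectation (cond_pmf (Ppath n x) {t. \<forall>j\<le>i. t j = s j})
               (\<lambda>t. Ef (n - Suc i) (t (Suc i)) (k - Suc i))
            = Ef (n - i) (s i) (k - i))
       \<and> (\<forall>i<k. \<forall>s\<in>set_pmf (Ppath n x).
            \<bar>Ef (n - Suc i) (s (Suc i)) (k - Suc i) - Ef (n - i) (s i) (k - i)\<bar> \<le> 2)
       \<and> (k = n \<longrightarrow> (\<forall>i\<le>k. \<forall>y\<ge>0.
            Ef (n - i) y (k - i) = -1 + (real_of_int y + 1) / psi y (n - i)))"
proof (intro conjI allI impI ballI)
  have SP: "set_pmf (Ppath n x) = paths n x"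
    unfolding Ppath_def using assms by (simp add: paths_ne finite_paths)
  {
    fix i s assume i: "i < k" and s': "s \<in> set_pmf (Ppath n x)"
    have s: "s \<in> paths n x" using s' SP by simp
    define m where "m = n - Suc i"
    define j where "j = k - Suc i"
    define y where "y = s i"
    have nm: "n - i = Suc m" "k - i = Suc j" "j \<le> m" using i assms by (auto simp: m_def j_def)
    have y: "0 \<le> y" using s i assms by (auto simp: paths_def y_def)
    define C where "C = paths n x \<inter> {t. \<forall>j\<le>i. t j = s j}"
    have bij: "bij_betw (\<lambda>t j. t (i + j)) C (paths (Suc m) y)"
      using shift_bij[OF s, of i] i assms nm by (simp add: C_def y_def)
    have sC: "s \<in> C" using s by (simp add: C_def)
    have fC: "finite C" using finite_paths by (simp add: C_def)
    have cond: "cond_pmf (Ppath n x) {t. \<forall>j\<le>i. t j = s j} = pmf_of_set C"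
      unfolding Ppath_def C_def by (rule cond_pmf_of_set') (use sC C_def finite_paths in auto)
    define g where "g z = Ef m z j" for z
    have "(\<Sum>t\<in>C. g (t (Suc i))) = (\<Sum>c\<in>paths (Suc m) y. g (c 1))"
      using sum.reindex_bij_betw[OF bij, of "\<lambda>c. g (c 1)"] by simp
    also have "\<dots> = Nr m (y+1) * g (y+1) + Nr m (y-1) * g (y-1)"
      by (subst sum_paths_Suc[OF y]) (simp add: sum_c0)
    also have "\<dots> = Sj (Suc m) y (Suc j)"
    proof -
      have "Nr m (y+1) * g (y+1) = Sj m (y+1) j" using y by (simp add: g_def Ef_Eq NEq)
      moreover have "Nr m (y-1) * g (y-1) = Sj m (y-1) j"
        by (cases "y - 1 < 0") (simp_all add: g_def Ef_Eq NEq Nr_neg Sj_neg)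
      ultimately show ?thesis using y by (simp add: Sj_Suc)
    qed
    finally have sumC: "(\<Sum>t\<in>C. g (t (Suc i))) = Sj (Suc m) y (Suc j)" .
    have cardC: "real (card C) = Nr (Suc m) y" using bij_betw_same_card[OF bij] by (simp add: Nr_def)
    have "measure_pmf.expectation (cond_pmf (Ppath n x) {t. \<forall>j\<le>i. t j = s j})
               (\<lambda>t. Ef (n - Suc i) (t (Suc i)) (k - Suc i)) = (\<Sum>t\<in>C. g (t (Suc i))) / card C"
      unfolding cond g_def m_def j_def by (subst integral_pmf_of_set) (use sC fC in auto)
    also have "\<dots> = Ef (n - i) (s i) (k - i)"
      unfolding sumC cardC nm using y by (simp add: Ef_Eq Eq_def y_def)
    finally show "measure_pmf.expectation (cond_pmf (Ppath n x) {t. \<forall>j\<le>i. t j = s j})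
               (\<lambda>t. Ef (n - Suc i) (t (Suc i)) (k - Suc i)) = Ef (n - i) (s i) (k - i)" .
  }
  {
    fix i s assume i: "i < k" and s': "s \<in> set_pmf (Ppath n x)"
    have s: "s \<in> paths n x" using s' SP by simp
    define m where "m = n - Suc i"
    define j where "j = k - Suc i"
    define y where "y = s i"
    define z where "z = s (Suc i)"
    have nm: "n - i = Suc m" "k - i = Suc j" "j \<le> m" using i assms by (auto simp: m_def j_def)
    have y: "0 \<le> y" using s i assms by (auto simp: paths_def y_def)
    have z: "0 \<le> z" using s i assms by (auto simp: paths_def z_def)
    have "\<bar>z - y\<bar> = 1" using s i assms by (auto simp: paths_def z_def y_def)
    then have zy: "z = y + 1 \<or> z = y - 1" by auto
    have "\<bar>Eq m z j - Eq (Suc m) y (Suc j)\<bar> \<le> 2" by (rule step_bound[OF nm(3) y zy z])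
    then show "\<bar>Ef (n - Suc i) (s (Suc i)) (k - Suc i) - Ef (n - i) (s i) (k - i)\<bar> \<le> 2"
      using y z nm by (simp add: Ef_Eq m_def j_def y_def z_def)
  }
  {
    fix i and y :: int assume "k = n" "i \<le> k" "0 \<le> y"
    then show "Ef (n - i) y (k - i) = -1 + (real_of_int y + 1) / psi y (n - i)"
      by (simp add: Ef_Eq Eq_final)
  }
qed

end
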